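(* Let $1\le p<\infty$. The Hamming graphs $([\mathbb N]^k,d^{(k)}_{\mathsf H})$, $k\in\mathbb N$, equi-coarsely embed into the Banach space $\big(\bigoplus_{k=1}^\infty\ell_p^k(T^* )\big)_{T^*}$.
   Context: $d^{(k)}_{\mathsf H}(\bar m,\bar n)=|\{j:m_j\ne n_j\}|$ for $\bar m=\{m_1<\dots<m_k\},\bar n=\{n_1<\dots<n_k\}\in[\mathbb N]^k$. $T^*$ is the dual of Tsirelson's space $T$ (completion of $c_{00}$ under $\|x\|_T=\max\{\|x\|_\infty,\frac12\sup\sum_{j=1}^n\|E_j(x)\|_T\}$, supremum over $n$ and finite sets $n\le E_1<\dots<E_n$), with its $1$-unconditional basis $(e_j)$. $\ell_p^k(T^* )$ is the $\ell_p^k$-sum of $k$ copies of $T^*$; $(\bigoplus Y_k)_{T^*}$ consists of $(y_k)$ with $\sum\|y_k\|e_k$ convergent in $T^*$, normed by $\|\sum\|y_k\|e_k\|_{T^*}$. A family $(M_i)$ of metric spaces equi-coarsely embeds into $Y$ if there are non-decreasing $\rho,\omega:[0,\infty)\to[0,\infty)$ with $\lim_{t\to\infty}\rho(t)=\infty$ and maps $f_i:M_i\to Y$ with $\rho(d(x,y))\le d_Y(f_i(x),f_i(y))\le\omega(d(x,y))$ for all $i$ and $x,y\in M_i$. *)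

theory Defs
  imports "HOL-Analysis.Analysis" "HOL-Library.Function_Algebras"
begin

text \<open>Conventions: the basis of Tsirelson's space is indexed by 1,2,3,...;
  vectors are functions nat => real with coordinate 0 forced to be 0.\<close>

definition c00 :: "(nat \<Rightarrow> real) set" where
  "c00 = {x. finite {j. x j \<noteq> 0} \<and> x 0 = 0}"

definition restr :: "nat set \<Rightarrow> (nat \<Rightarrow> real) \<Rightarrow> nat \<Rightarrow> real" where
  "restr E x = (\<lambda>j. if j \<in> E then x j else 0)"

text \<open>Admissible families: n \<le> E_1 < E_2 < ... < E_n, finite nonempty sets
  (E_1,...,E_n are E 0, ..., E (n-1)).\<close>
definition admissible :: "nat \<Rightarrow> (nat \<Rightarrow> nat set) \<Rightarrow> bool" where
  "admissible n E \<longleftrightarrow> n \<ge> 1 \<and> (\<forall>i<n. finite (E i) \<and> E i \<noteq> {})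
     \<and> (\<forall>i. Suc i < n \<longrightarrow> Max (E i) < Min (E (Suc i)))
     \<and> n \<le> Min (E 0)"

fun tnorm_iter :: "nat \<Rightarrow> (nat \<Rightarrow> real) \<Rightarrow> real" where
  "tnorm_iter 0 x = (SUP j. \<bar>x j\<bar>)"
| "tnorm_iter (Suc m) x = max (tnorm_iter m x)
     ((1/2) * Sup {(\<Sum>i<n. tnorm_iter m (restr (E i) x)) | n E. admissible n E})"

definition tnorm :: "(nat \<Rightarrow> real) \<Rightarrow> real" where
  "tnorm x = (SUP m. tnorm_iter m x)"

text \<open>T^* as a sequence space: coefficient sequences of bounded functionals on
  (c00, ||.||_T), equivalently on its completion T.\<close>
definition tstar_vals :: "(nat \<Rightarrow> real) \<Rightarrow> real set" where
  "tstar_vals y = {\<bar>\<Sum>j\<in>{j. x j \<noteq> 0}. x j * y j\<bar> | x. x \<in> c00 \<and> tnorm x \<le> 1}"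

definition Tstar :: "(nat \<Rightarrow> real) set" where
  "Tstar = {y. y 0 = 0 \<and> bdd_above (tstar_vals y)}"

definition tstar_norm :: "(nat \<Rightarrow> real) \<Rightarrow> real" where
  "tstar_norm y = Sup (tstar_vals y)"

definition lpT :: "real \<Rightarrow> nat \<Rightarrow> (nat \<Rightarrow> nat \<Rightarrow> real) set" where
  "lpT p k = {y. (\<forall>i\<in>{1..k}. y i \<in> Tstar) \<and> (\<forall>i. i \<notin> {1..k} \<longrightarrow> y i = 0)}"

definition lpT_norm :: "real \<Rightarrow> nat \<Rightarrow> (nat \<Rightarrow> nat \<Rightarrow> real) \<Rightarrow> real" where
  "lpT_norm p k y = (\<Sum>i=1..k. tstar_norm (y i) powr p) powr (1/p)"

text \<open>The sum (\<Oplus>_k \<ell>_p^k(T^*))_{T^*}; z k is the k-th component (k \<ge> 1).\<close>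
definition weights :: "real \<Rightarrow> (nat \<Rightarrow> nat \<Rightarrow> nat \<Rightarrow> real) \<Rightarrow> nat \<Rightarrow> real" where
  "weights p z = (\<lambda>k. if k = 0 then 0 else lpT_norm p k (z k))"

definition SumSpace :: "real \<Rightarrow> (nat \<Rightarrow> nat \<Rightarrow> nat \<Rightarrow> real) set" where
  "SumSpace p = {z. z 0 = 0 \<and> (\<forall>k\<ge>1. z k \<in> lpT p k) \<and>
     (\<exists>s\<in>Tstar. (\<lambda>N. tstar_norm (\<lambda>j. s j - (if j \<le> N then weights p z j else 0)))
                  \<longlonglongrightarrow> 0)}"

definition sum_norm :: "real \<Rightarrow> (nat \<Rightarrow> nat \<Rightarrow> nat \<Rightarrow> real) \<Rightarrow> real" where
  "sum_norm p z = tstar_norm (weights p z)"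

definition ksets :: "nat \<Rightarrow> nat set set" where
  "ksets k = {M. finite M \<and> card M = k}"

definition hamming :: "nat \<Rightarrow> nat set \<Rightarrow> nat set \<Rightarrow> nat" where
  "hamming k M N = card {j. j < k \<and> sorted_list_of_set M ! j \<noteq> sorted_list_of_set N ! j}"

end

theory Submission
  imports Defs
begin

definition l1 :: "(nat \<Rightarrow> real) \<Rightarrow> real" where
  "l1 x = (\<Sum>j\<in>{j. x j \<noteq> 0}. \<bar>x j\<bar>)"

lemma adm_lt:
  assumes "admissible n E" "i < i'" "i' < n"
  shows "Max (E i) < Min (E i')"
  using assms(2,3)
proof (induction i')
  case 0 then show ?case by simp
next
  case (Suc i'')
  have step: "Max (E i'') < Min (E (Suc i''))"
    using assms(1) Suc.prems unfolding admissible_def by blast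
  show ?case
  proof (cases "i = i''")
    case True then show ?thesis using step by simp
  next
    case False
    then have "i < i''" using Suc.prems by simp
    then have a: "Max (E i) < Min (E i'')" using Suc.IH Suc.prems by simp
    have "finite (E i'')" "E i'' \<noteq> {}" using assms(1) Suc.prems unfolding admissible_def by auto
    then have "Min (E i'') \<le> Max (E i'')" by (meson Max_ge Min_in Min_le)
    then show ?thesis using a step by linarith
  qed
qed

lemma adm_disj:
  assumes "admissible n E" "i < n" "i' < n" "i \<noteq> i'"
  shows "E i \<inter> E i' = {}"
proof -
  have fin: "\<And>l. l < n \<Longrightarrow> finite (E l) \<and> E l \<noteq> {}" using assms(1) unfolding admissible_def by auto
  have "E a \<inter> E b = {}" if "a < b" "b < n" for a b
  proof (rule ccontr)
    assume "E a \<inter> E b \<noteq> {}"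
    then obtain j where j: "j \<in> E a" "j \<in> E b" by blast
    have "j \<le> Max (E a)" using fin[of a] that j by auto
    moreover have "Min (E b) \<le> j" using fin[of b] that j by auto
    moreover have "Max (E a) < Min (E b)" using adm_lt[OF assms(1) that] .
    ultimately show False by linarith
  qed
  then show ?thesis using assms by (metis Int_commute linorder_neqE_nat)
qed

lemma l1_restr: "x \<in> c00 \<Longrightarrow> l1 (restr A x) = (\<Sum>j\<in>{j. x j \<noteq> 0} \<inter> A. \<bar>x j\<bar>)"
  unfolding l1_def restr_def
  by (rule sum.cong) auto

lemma restr_c00: "x \<in> c00 \<Longrightarrow> restr A x \<in> c00"
  unfolding c00_def restr_def
  by (auto elim: rev_finite_subset)

lemma l1_nonneg: "l1 x \<ge> 0" unfolding l1_def by (simp add: sum_nonneg)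

lemma l1_adm:
  assumes "x \<in> c00" "admissible n E"
  shows "(\<Sum>i<n. l1 (restr (E i) x)) \<le> l1 x"
proof -
  let ?S = "{j. x j \<noteq> 0}"
  have finS: "finite ?S" using assms(1) unfolding c00_def by auto
  have "(\<Sum>i<n. l1 (restr (E i) x)) = (\<Sum>i<n. \<Sum>j\<in>?S \<inter> E i. \<bar>x j\<bar>)"
    using l1_restr[OF assms(1)] by simp
  also have "\<dots> = (\<Sum>j\<in>(\<Union>i\<in>{..<n}. ?S \<inter> E i). \<bar>x j\<bar>)"
    by (rule sum.UNION_disjoint[symmetric]) (use finS adm_disj[OF assms(2)] in auto)
  also have "\<dots> \<le> (\<Sum>j\<in>?S. \<bar>x j\<bar>)"
    by (rule sum_mono2) (use finS in auto)
  finally show ?thesis unfolding l1_def .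
qed

lemma adm_ex: "admissible 1 (\<lambda>_. {1})"
  unfolding admissible_def by auto

lemma coord_le_l1: "x \<in> c00 \<Longrightarrow> \<bar>x j\<bar> \<le> l1 x"
proof (cases "x j = 0")
  case True then show ?thesis using l1_nonneg by simp
next
  case False
  assume x: "x \<in> c00"
  have "finite {j. x j \<noteq> 0}" using x unfolding c00_def by auto
  then show ?thesis unfolding l1_def using False
    by (intro member_le_sum) auto
qed

lemma tnorm_iter_le: "x \<in> c00 \<Longrightarrow> tnorm_iter m x \<le> l1 x"
proof (induction m arbitrary: x)
  case 0
  have "\<bar>x j\<bar> \<le> l1 x" for j
  proof (cases "x j = 0")
    case True then show ?thesis using l1_nonneg by simp
  next
    case False
    have "finite {j. x j \<noteq> 0}" using 0 unfolding c00_def by auto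
    then show ?thesis unfolding l1_def using False
      by (intro member_le_sum) auto
  qed
  then show ?case by (simp add: cSUP_least)
next
  case (Suc m)
  let ?A = "{(\<Sum>i<n. tnorm_iter m (restr (E i) x)) | n E. admissible n E}"
  have "a \<le> l1 x" if ha: "a \<in> ?A" for a
  proof -
    obtain n E where a: "a = (\<Sum>i<n. tnorm_iter m (restr (E i) x))" "admissible n E"
      using ha by auto
    have "a \<le> (\<Sum>i<n. l1 (restr (E i) x))"
      unfolding a(1) by (intro sum_mono Suc.IH restr_c00 Suc.prems)
    also have "\<dots> \<le> l1 x" using l1_adm[OF Suc.prems a(2)] .
    finally show ?thesis .
  qed
  moreover have "?A \<noteq> {}" using adm_ex by blast
  ultimately have "Sup ?A \<le> l1 x" by (intro cSup_least) auto
  then show ?case using Suc.IH[OF Suc.prems] l1_nonneg[of x] by simp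
qed

lemma tnorm_iter_mono: "tnorm_iter 0 x \<le> tnorm_iter m x"
  by (induction m) auto

lemma tnorm_bdd: "x \<in> c00 \<Longrightarrow> bdd_above (range (\<lambda>m. tnorm_iter m x))"
  using tnorm_iter_le by (intro bdd_aboveI) blast

lemma tnorm_le: "x \<in> c00 \<Longrightarrow> tnorm x \<le> l1 x"
  unfolding tnorm_def using tnorm_iter_le by (simp add: cSUP_least)

lemma coord_le_tnorm:
  assumes "x \<in> c00" shows "\<bar>x j\<bar> \<le> tnorm x"
proof -
  have "bdd_above (range (\<lambda>j. \<bar>x j\<bar>))"
    using coord_le_l1[OF assms] by (intro bdd_aboveI[of _ "l1 x"]) auto
  then have "\<bar>x j\<bar> \<le> tnorm_iter 0 x" unfolding tnorm_iter.simps by (rule cSUP_upper[rotated]) auto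
  also have "\<dots> \<le> tnorm x" unfolding tnorm_def
    by (rule order_trans[OF tnorm_iter_mono[of x 0]]) (rule cSUP_upper[OF _ tnorm_bdd[OF assms]], simp)
  finally show ?thesis .
qed

definition ee :: "nat \<Rightarrow> nat \<Rightarrow> real" where
  "ee a = (\<lambda>j. if j = a then 1 else 0)"

lemma ee_c00: "a \<ge> 1 \<Longrightarrow> ee a \<in> c00"
  unfolding c00_def ee_def by auto

lemma ee_tnorm: "a \<ge> 1 \<Longrightarrow> tnorm (ee a) \<le> 1"
proof -
  assume a: "a \<ge> 1"
  have "{j. ee a j \<noteq> 0} = {a}" unfolding ee_def by auto
  then have "l1 (ee a) = 1" unfolding l1_def by (simp add: ee_def)
  then show ?thesis using tnorm_le[OF ee_c00[OF a]] by simp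
qed

lemma sum_ee: "x \<in> c00 \<Longrightarrow> (\<Sum>j\<in>{j. x j \<noteq> 0}. x j * ee a j) = x a"
proof -
  assume x: "x \<in> c00"
  have fin: "finite {j. x j \<noteq> 0}" using x unfolding c00_def by auto
  have "(\<Sum>j\<in>{j. x j \<noteq> 0}. x j * ee a j) = (\<Sum>j\<in>{j. x j \<noteq> 0}. if j = a then x a else 0)"
    by (rule sum.cong) (auto simp: ee_def)
  also have "\<dots> = x a" using fin by (simp add: sum.delta)
  finally show ?thesis .
qed

lemma tstar_bounds:
  assumes "\<And>x. x \<in> c00 \<Longrightarrow> tnorm x \<le> 1 \<Longrightarrow> \<bar>\<Sum>j\<in>{j. x j \<noteq> 0}. x j * y j\<bar> \<le> C"
    and "x0 \<in> c00" "tnorm x0 \<le> 1" "L \<le> \<bar>\<Sum>j\<in>{j. x0 j \<noteq> 0}. x0 j * y j\<bar>"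
  shows "bdd_above (tstar_vals y)" "L \<le> tstar_norm y" "tstar_norm y \<le> C"
proof -
  have ub: "v \<le> C" if "v \<in> tstar_vals y" for v
    using that assms(1) unfolding tstar_vals_def by blast
  show bdd: "bdd_above (tstar_vals y)" using ub by (rule bdd_aboveI)
  have mem: "\<bar>\<Sum>j\<in>{j. x0 j \<noteq> 0}. x0 j * y j\<bar> \<in> tstar_vals y"
    unfolding tstar_vals_def using assms(2,3) by blast
  show "L \<le> tstar_norm y" unfolding tstar_norm_def
    using cSup_upper[OF mem bdd] assms(4) by linarith
  show "tstar_norm y \<le> C" unfolding tstar_norm_def
    using mem ub by (intro cSup_least) auto
qed

lemma tstar_scaled:
  assumes "a \<ge> 1"
  shows "(\<lambda>j. c * ee a j) \<in> Tstar" "tstar_norm (\<lambda>j. c * ee a j) = \<bar>c\<bar>"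
proof -
  have key: "(\<Sum>j\<in>{j. x j \<noteq> 0}. x j * (c * ee a j)) = c * x a" if "x \<in> c00" for x
  proof -
    have "(\<Sum>j\<in>{j. x j \<noteq> 0}. x j * (c * ee a j)) = c * (\<Sum>j\<in>{j. x j \<noteq> 0}. x j * ee a j)"
      by (simp add: sum_distrib_left mult.left_commute)
    then show ?thesis using sum_ee[OF that] by simp
  qed
  have A: "\<bar>\<Sum>j\<in>{j. x j \<noteq> 0}. x j * (c * ee a j)\<bar> \<le> \<bar>c\<bar>" if "x \<in> c00" "tnorm x \<le> 1" for x
  proof -
    have "\<bar>x a\<bar> \<le> 1" using coord_le_tnorm[OF that(1), of a] that(2) by linarith
    then show ?thesis using key[OF that(1)] by (simp add: abs_mult mult_left_le)
  qed
  have B: "\<bar>c\<bar> \<le> \<bar>\<Sum>j\<in>{j. ee a j \<noteq> 0}. ee a j * (c * ee a j)\<bar>"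
    using key[OF ee_c00[OF assms]] by (simp add: ee_def)
  note r = tstar_bounds[OF A ee_c00[OF assms] ee_tnorm[OF assms] B]
  show "(\<lambda>j. c * ee a j) \<in> Tstar" unfolding Tstar_def using r(1) assms by (simp add: ee_def)
  show "tstar_norm (\<lambda>j. c * ee a j) = \<bar>c\<bar>" using r(2,3) by simp
qed

lemma tstar_zero: "(0::nat\<Rightarrow>real) \<in> Tstar" "tstar_norm (0::nat\<Rightarrow>real) = 0"
proof -
  have e: "(0::nat\<Rightarrow>real) = (\<lambda>j. 0 * ee 1 j)" by auto
  show "(0::nat\<Rightarrow>real) \<in> Tstar" "tstar_norm (0::nat\<Rightarrow>real) = 0"
    by (subst e, use tstar_scaled[of 1 0] in simp)+
qed

lemma tstar_ee: "a \<ge> 1 \<Longrightarrow> ee a \<in> Tstar"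
  using tstar_scaled(1)[of a 1] by simp

lemma tstar_diff:
  assumes "a \<ge> 1" "b \<ge> 1" "a \<noteq> b"
  shows "ee a - ee b \<in> Tstar" "1 \<le> tstar_norm (ee a - ee b)" "tstar_norm (ee a - ee b) \<le> 2"
proof -
  have key: "(\<Sum>j\<in>{j. x j \<noteq> 0}. x j * (ee a - ee b) j) = x a - x b" if "x \<in> c00" for x
  proof -
    have "(\<Sum>j\<in>{j. x j \<noteq> 0}. x j * (ee a - ee b) j) = (\<Sum>j\<in>{j. x j \<noteq> 0}. x j * ee a j - x j * ee b j)"
      by (simp add: algebra_simps)
    also have "\<dots> = x a - x b" using sum_ee[OF that, of a] sum_ee[OF that, of b]
      by (simp add: sum_subtractf)
    finally show ?thesis .
  qed
  have A: "\<bar>\<Sum>j\<in>{j. x j \<noteq> 0}. x j * (ee a - ee b) j\<bar> \<le> 2" if "x \<in> c00" "tnorm x \<le> 1" for x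
    using key[OF that(1)] coord_le_tnorm[OF that(1), of a] coord_le_tnorm[OF that(1), of b] that(2)
    by linarith
  have B: "1 \<le> \<bar>\<Sum>j\<in>{j. ee a j \<noteq> 0}. ee a j * (ee a - ee b) j\<bar>"
    using key[OF ee_c00[OF assms(1)]] assms by (simp add: ee_def)
  note r = tstar_bounds[OF A ee_c00[OF assms(1)] ee_tnorm[OF assms(1)] B]
  show "ee a - ee b \<in> Tstar" unfolding Tstar_def using r(1) assms by (simp add: ee_def fun_diff_def)
  show "1 \<le> tstar_norm (ee a - ee b)" "tstar_norm (ee a - ee b) \<le> 2" using r(2,3) by (auto simp: fun_diff_def)
qed


definition FF :: "nat \<Rightarrow> nat set \<Rightarrow> nat \<Rightarrow> nat \<Rightarrow> nat \<Rightarrow> real" where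
  "FF k M = (\<lambda>k' i. if k' = k \<and> 1 \<le> i \<and> i \<le> k then ee (sorted_list_of_set M ! (i-1) + 1) else 0)"

lemma lpT_zero: "lpT_norm p k 0 = 0"
  unfolding lpT_norm_def using tstar_zero(2) by (simp add: zero_fun_def)

lemma lpT_nonneg: "lpT_norm p k y \<ge> 0"
  unfolding lpT_norm_def by simp

lemma weights_single:
  assumes "k \<ge> 1" "\<And>k'. k' \<noteq> k \<Longrightarrow> z k' = 0"
  shows "weights p z = (\<lambda>j. lpT_norm p k (z k) * ee k j)"
proof
  fix j
  show "weights p z j = lpT_norm p k (z k) * ee k j"
  proof (cases "j = k")
    case True then show ?thesis using assms unfolding weights_def ee_def by simp
  next
    case False then show ?thesis using assms lpT_zero unfolding weights_def ee_def by simp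
  qed
qed

lemma sum_norm_single:
  assumes "k \<ge> 1" "\<And>k'. k' \<noteq> k \<Longrightarrow> z k' = 0"
  shows "sum_norm p z = lpT_norm p k (z k)"
proof -
  have "sum_norm p z = tstar_norm (\<lambda>j. lpT_norm p k (z k) * ee k j)"
    unfolding sum_norm_def using weights_single[OF assms, where p=p] by simp
  also have "\<dots> = \<bar>lpT_norm p k (z k)\<bar>" by (rule tstar_scaled(2)[OF assms(1)])
  finally show ?thesis using lpT_nonneg by simp
qed

lemma sum_shift1: "(\<Sum>i=1..k. g i) = (\<Sum>j<k. g (Suc j) :: real)"
  by (induction k) (simp_all add: lessThan_Suc)

lemma sum_if_const: "(\<Sum>j<(k::nat). if d j then (c::real) else 0) = c * real (card {j. j < k \<and> d j})"
proof -
  have e: "{j. j < k \<and> d j} = {..<k} \<inter> {j. d j}" by auto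
  show ?thesis unfolding e by (subst sum.If_cases) simp_all
qed

lemma diff_bounds:
  assumes p: "1 \<le> p" and k: "k \<ge> 1"
  shows "real (hamming k M N) powr (1/p) \<le> sum_norm p (FF k M - FF k N)"
    "sum_norm p (FF k M - FF k N) \<le> 2 * real (hamming k M N) powr (1/p)"
proof -
  let ?z = "FF k M - FF k N"
  let ?a = "\<lambda>j. sorted_list_of_set M ! j + 1"
  let ?b = "\<lambda>j. sorted_list_of_set N ! j + 1"
  let ?d = "\<lambda>j. sorted_list_of_set M ! j \<noteq> sorted_list_of_set N ! j"
  have z0: "?z k' = 0" if "k' \<noteq> k" for k'
    using that by (auto simp: FF_def fun_diff_def zero_fun_def)
  have sn: "sum_norm p ?z = lpT_norm p k (?z k)" by (rule sum_norm_single[OF k z0])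
  define t where "t j = tstar_norm (ee (?a j) - ee (?b j)) powr p" for j
  have zk: "?z k (Suc j) = ee (?a j) - ee (?b j)" if "j < k" for j
    using that by (simp add: FF_def fun_diff_def)
  have S: "(\<Sum>i=1..k. tstar_norm (?z k i) powr p) = (\<Sum>j<k. t j)"
    unfolding sum_shift1 t_def by (rule sum.cong) (auto simp: FF_def)
  have tlo: "(if ?d j then 1 else 0) \<le> t j" and thi: "t j \<le> (if ?d j then 2 powr p else 0)" for j
  proof -
    have "t j \<ge> 1 \<and> t j \<le> 2 powr p" if "?d j"
    proof -
      have "?a j \<noteq> ?b j" using that by simp
      note r = tstar_diff[of "?a j" "?b j", OF _ _ this]
      have "1 \<le> tstar_norm (ee (?a j) - ee (?b j))" "tstar_norm (ee (?a j) - ee (?b j)) \<le> 2"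
        using r by auto
      then have "1 powr p \<le> tstar_norm (ee (?a j) - ee (?b j)) powr p"
        "tstar_norm (ee (?a j) - ee (?b j)) powr p \<le> 2 powr p"
        using p by (intro powr_mono2; simp)+
      then show ?thesis unfolding t_def by simp
    qed
    moreover have "t j = 0" if "\<not> ?d j"
      using that tstar_zero(2) unfolding t_def by simp
    ultimately show "(if ?d j then 1 else 0) \<le> t j" "t j \<le> (if ?d j then 2 powr p else 0)"
      by auto
  qed
  define h where "h = real (hamming k M N)"
  have hdef: "h = real (card {j. j < k \<and> ?d j})" unfolding h_def hamming_def by simp
  have lo: "h \<le> (\<Sum>j<k. t j)"
    using sum_mono[of "{..<k}", OF tlo] unfolding hdef sum_if_const by simp
  have hi: "(\<Sum>j<k. t j) \<le> 2 powr p * h"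
    using sum_mono[of "{..<k}", OF thi] unfolding hdef sum_if_const by simp
  have h0: "0 \<le> h" unfolding h_def by simp
  have L: "lpT_norm p k (?z k) = (\<Sum>j<k. t j) powr (1/p)"
    unfolding lpT_norm_def S ..
  show "real (hamming k M N) powr (1/p) \<le> sum_norm p ?z"
    unfolding sn L h_def[symmetric] using lo h0 p by (intro powr_mono2) auto
  have "(\<Sum>j<k. t j) powr (1/p) \<le> (2 powr p * h) powr (1/p)"
    using hi h0 p lo by (intro powr_mono2) auto
  also have "\<dots> = 2 * h powr (1/p)"
    using p h0 by (simp add: powr_mult powr_powr)
  finally show "sum_norm p ?z \<le> 2 * real (hamming k M N) powr (1/p)"
    unfolding sn L h_def .
qed

lemma FF_space:
  assumes k: "k \<ge> 1"
  shows "FF k M \<in> SumSpace p"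
proof -
  have z0: "FF k M k' = 0" if "k' \<noteq> k" for k'
    using that by (auto simp: FF_def zero_fun_def)
  have A: "FF k M 0 = 0" using z0 k by simp
  have B: "FF k M k' \<in> lpT p k'" if "k' \<ge> 1" for k'
    unfolding lpT_def using tstar_ee tstar_zero(1)
    by (auto simp: FF_def zero_fun_def[symmetric])
  define c where "c = lpT_norm p k (FF k M k)"
  have W: "weights p (FF k M) = (\<lambda>j. c * ee k j)"
    unfolding c_def by (rule weights_single[OF k z0])
  have C: "(\<lambda>N. tstar_norm (\<lambda>j. c * ee k j - (if j \<le> N then weights p (FF k M) j else 0)))
            \<longlonglongrightarrow> 0"
  proof (rule tendsto_eventually, rule eventually_sequentiallyI[of k])
    fix N assume "k \<le> N"
    then have "(\<lambda>j. c * ee k j - (if j \<le> N then weights p (FF k M) j else 0)) = 0"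
      unfolding W by (auto simp: ee_def)
    then show "tstar_norm (\<lambda>j. c * ee k j - (if j \<le> N then weights p (FF k M) j else 0)) = 0"
      using tstar_zero(2) by simp
  qed
  show ?thesis unfolding SumSpace_def mem_Collect_eq
  proof (intro conjI allI impI)
    show "FF k M 0 = 0" by (rule A)
    show "FF k M k' \<in> lpT p k'" if "1 \<le> k'" for k' using B[OF that] .
    show "\<exists>s\<in>Tstar. (\<lambda>N. tstar_norm (\<lambda>j. s j - (if j \<le> N then weights p (FF k M) j else 0))) \<longlonglongrightarrow> 0"
      using C tstar_scaled(1)[OF k, of c] by (intro bexI[of _ "\<lambda>j. c * ee k j"]) auto
  qed
qed

lemma rho_lim: "0 < p \<Longrightarrow> filterlim (\<lambda>t::real. t powr (1/p)) at_top at_top"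
proof -
  assume p: "0 < p"
  show ?thesis
  proof (rule filterlim_at_top[THEN iffD2], intro allI)
    fix Z :: real
    show "\<forall>\<^sub>F t in at_top. Z \<le> t powr (1/p)"
      unfolding eventually_at_top_linorder
    proof (intro exI[of _ "\<bar>Z\<bar> powr p"] allI impI)
      fix t :: real assume t: "\<bar>Z\<bar> powr p \<le> t"
      have "(\<bar>Z\<bar> powr p) powr (1/p) \<le> t powr (1/p)"
        using t p by (intro powr_mono2) auto
      moreover have "(\<bar>Z\<bar> powr p) powr (1/p) = \<bar>Z\<bar>"
        using p by (simp add: powr_powr)
      ultimately show "Z \<le> t powr (1/p)" by linarith
    qed
  qed
qed

theorem proposition4p2:
  fixes p :: real
  assumes "1 \<le> p"
  shows "\<exists>(\<rho>::real \<Rightarrow> real) (\<omega>::real \<Rightarrow> real)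
            (f :: nat \<Rightarrow> nat set \<Rightarrow> nat \<Rightarrow> nat \<Rightarrow> nat \<Rightarrow> real).
     mono_on {0..} \<rho> \<and> mono_on {0..} \<omega> \<and>
     (\<forall>t\<ge>0. \<rho> t \<ge> 0 \<and> \<omega> t \<ge> 0) \<and>
     filterlim \<rho> at_top at_top \<and>
     (\<forall>k\<ge>1. \<forall>M\<in>ksets k. f k M \<in> SumSpace p) \<and>
     (\<forall>k\<ge>1. \<forall>M\<in>ksets k. \<forall>N\<in>ksets k.
        \<rho> (real (hamming k M N)) \<le> sum_norm p (f k M - f k N) \<and>
        sum_norm p (f k M - f k N) \<le> \<omega> (real (hamming k M N)))"
proof (intro exI conjI)
  show "mono_on {0..} (\<lambda>t::real. t powr (1/p))"
    using assms by (intro mono_onI powr_mono2) auto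
  show "mono_on {0..} (\<lambda>t::real. 2 * t powr (1/p))"
    using assms by (intro mono_onI) (auto intro: powr_mono2)
  show "\<forall>t\<ge>0. t powr (1/p) \<ge> 0 \<and> 2 * t powr (1/p) \<ge> (0::real)" by simp
  show "filterlim (\<lambda>t::real. t powr (1/p)) at_top at_top" using assms by (intro rho_lim) simp
  show "\<forall>k\<ge>1. \<forall>M\<in>ksets k. FF k M \<in> SumSpace p" using FF_space by blast
  show "\<forall>k\<ge>1. \<forall>M\<in>ksets k. \<forall>N\<in>ksets k.
        real (hamming k M N) powr (1/p) \<le> sum_norm p (FF k M - FF k N) \<and>
        sum_norm p (FF k M - FF k N) \<le> 2 * real (hamming k M N) powr (1/p)"
    using diff_bounds[OF assms] by blast
qed

end
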